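(* For all integers $\ell\ge1$, $k\ge1$, $n\ge1$, $$f_\ell(n,k)\le 2^{\lfloor \ell/2\rfloor}\cdot\lfloor \ell/2\rfloor!\cdot n^{\lfloor (\ell+1)/2\rfloor}.$$ Moreover, if $k\ge\lfloor\log_2(\ell+1)\rfloor$, then $$f_\ell(n,k)\ge \left\lfloor\frac nk\right\rfloor^{\lfloor\log_2(\ell+1)\rfloor}.$$
   Context: For a set $A$ and integer $k\ge1$, the Kneser graph $KG(A,k)$ has vertex set the family of all $k$-element subsets of $A$, two vertices $X,Y$ being adjacent iff $X\cap Y=\emptyset$; $KG(n,k)$ denotes one with an $n$-element base set. The xor-product of graphs $G_1,\dots,G_\ell$ has vertex set $V(G_1)\times\dots\times V(G_\ell)$, two vertices being adjacent iff they are adjacent in an odd number of coordinates. $f_\ell(n,k)$ is the clique number of the xor-product of $\ell$ copies of $KG(n,k)$; equivalently, the maximum size of a family $\mathcal S$ of subsets of $A_1\cup\dots\cup A_\ell$ ($A_i$ pairwise disjoint, $|A_i|=n$) with $|S\cap A_i|=k$ for all $S\in\mathcal S$ and all $i$, such that for distinct $S,T\in\mathcal S$ the number of $i$ with $S\cap T\cap A_i=\emptyset$ is odd. *)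

theory Defs
  imports Complex_Main "HOL-Library.FuncSet"
begin

definition kneser_vertices :: "nat \<Rightarrow> nat \<Rightarrow> nat set set" where
  "kneser_vertices n k = {X. X \<subseteq> {0..<n} \<and> card X = k}"

definition kneser_adj :: "nat set \<Rightarrow> nat set \<Rightarrow> bool" where
  "kneser_adj X Y \<longleftrightarrow> X \<inter> Y = {}"

definition xor_kneser_vertices :: "nat \<Rightarrow> nat \<Rightarrow> nat \<Rightarrow> (nat \<Rightarrow> nat set) set" where
  "xor_kneser_vertices l n k = PiE {0..<l} (\<lambda>_. kneser_vertices n k)"

definition xor_kneser_adj :: "nat \<Rightarrow> (nat \<Rightarrow> nat set) \<Rightarrow> (nat \<Rightarrow> nat set) \<Rightarrow> bool" where
  "xor_kneser_adj l x y \<longleftrightarrow> odd (card {i \<in> {0..<l}. kneser_adj (x i) (y i)})"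

definition is_xor_kneser_clique :: "nat \<Rightarrow> nat \<Rightarrow> nat \<Rightarrow> (nat \<Rightarrow> nat set) set \<Rightarrow> bool" where
  "is_xor_kneser_clique l n k C \<longleftrightarrow> C \<subseteq> xor_kneser_vertices l n k \<and>
     (\<forall>x\<in>C. \<forall>y\<in>C. x \<noteq> y \<longrightarrow> xor_kneser_adj l x y)"

definition f_xor :: "nat \<Rightarrow> nat \<Rightarrow> nat \<Rightarrow> nat" where
  "f_xor l n k = Max {card C | C. is_xor_kneser_clique l n k C}"

end

theory Submission
  imports Defs
begin

definition gclq :: "nat set \<Rightarrow> nat \<Rightarrow> nat \<Rightarrow> (nat \<Rightarrow> nat set) set \<Rightarrow> bool" where
 "gclq I n k C \<longleftrightarrow> finite C \<and> (\<forall>x\<in>C. \<forall>i\<in>I. x i \<subseteq> {0..<n} \<and> card (x i) = k) \<and>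
    (\<forall>x\<in>C. \<forall>y\<in>C. x \<noteq> y \<longrightarrow> odd (card {i\<in>I. x i \<inter> y i = {}}))"

lemma gclq_base: assumes "gclq {} n k C" shows "card C \<le> 1"
proof -
  have f: "finite C" using assms unfolding gclq_def by simp
  have "\<forall>x\<in>C. \<forall>y\<in>C. x = y" using assms unfolding gclq_def by auto
  then show ?thesis using card_le_Suc0_iff_eq[OF f] by simp
qed

lemma gclq_sub: assumes "gclq I n k C" "j \<in> I"
  shows "gclq (I - {j}) n k {x\<in>C. a \<in> x j}"
  unfolding gclq_def
proof (intro conjI ballI impI)
  show "finite {x \<in> C. a \<in> x j}" using assms unfolding gclq_def by auto
next
  fix x i assume "x \<in> {x \<in> C. a \<in> x j}" "i \<in> I - {j}"
  then show "x i \<subseteq> {0..<n}" "card (x i) = k" using assms unfolding gclq_def by auto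
next
  fix x y assume xy: "x \<in> {x \<in> C. a \<in> x j}" "y \<in> {x \<in> C. a \<in> x j}" "x \<noteq> y"
  have "{i \<in> I - {j}. x i \<inter> y i = {}} = {i\<in>I. x i \<inter> y i = {}}" using xy by auto
  moreover have "odd (card {i\<in>I. x i \<inter> y i = {}})"
    using xy assms(1) unfolding gclq_def by simp
  ultimately show "odd (card {i \<in> I - {j}. x i \<inter> y i = {}})" by simp
qed

lemma card_filter_sum: "finite A \<Longrightarrow> card {x\<in>A. P x} = (\<Sum>x\<in>A. if P x then 1 else 0)"
  using sum.inter_filter[of A "\<lambda>_. 1::nat" P] by simp

lemma odd_step:
  assumes "j \<in> I" "\<And>D. gclq (I - {j}) n k D \<Longrightarrow> card D \<le> E" "gclq I n k C"
  shows "k * card C \<le> n * E"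
proof -
  have fC: "finite C" using assms(3) unfolding gclq_def by auto
  have "k * card C = (\<Sum>x\<in>C. card (x j))" using assms(1,3) unfolding gclq_def by simp
  also have "\<dots> = (\<Sum>x\<in>C. \<Sum>a\<in>{0..<n}. if a \<in> x j then 1 else 0)"
  proof (rule sum.cong)
    fix x assume "x \<in> C"
    then have sub: "x j \<subseteq> {0..<n}" using assms(1,3) unfolding gclq_def by auto
    have "(\<Sum>a\<in>{0..<n}. if a \<in> x j then 1 else 0) = card {a\<in>{0..<n}. a \<in> x j}"
      by (rule card_filter_sum[symmetric]) simp
    also have "{a\<in>{0..<n}. a \<in> x j} = x j" using sub by auto
    finally show "card (x j) = (\<Sum>a\<in>{0..<n}. if a \<in> x j then 1 else 0)" by simp
  qed simp
  also have "\<dots> = (\<Sum>a\<in>{0..<n}. \<Sum>x\<in>C. if a \<in> x j then 1 else 0)" by (rule sum.swap)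
  also have "\<dots> = (\<Sum>a\<in>{0..<n}. card {x\<in>C. a \<in> x j})"
    using fC by (simp add: card_filter_sum)
  also have "\<dots> \<le> (\<Sum>a\<in>{0..<n}. E)"
    by (rule sum_mono) (rule assms(2), rule gclq_sub[OF assms(3,1)])
  finally show ?thesis by simp
qed

lemma even_step:
  assumes fI: "finite I" and ev: "even (card I)" and ne: "I \<noteq> {}" and k: "k \<ge> 1"
    and IH: "\<And>j D. j \<in> I \<Longrightarrow> gclq (I - {j}) n k D \<Longrightarrow> k * card D \<le> Ob"
    and C: "gclq I n k C"
  shows "card C \<le> card I * Ob"
proof (cases "C = {}")
  case True then show ?thesis by simp
next
  case False
  then obtain S0 where S0: "S0 \<in> C" by auto
  have fC: "finite C" using C unfolding gclq_def by auto
  have cov: "C \<subseteq> (\<Union>j\<in>I. \<Union>a\<in>S0 j. {x\<in>C. a \<in> x j})"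
  proof
    fix x assume x: "x \<in> C"
    show "x \<in> (\<Union>j\<in>I. \<Union>a\<in>S0 j. {x\<in>C. a \<in> x j})"
    proof (cases "x = S0")
      case True
      obtain j where j: "j \<in> I" using ne by auto
      then have "card (S0 j) = k" using C S0 unfolding gclq_def by auto
      then obtain a where "a \<in> S0 j" using k by fastforce
      then show ?thesis using True j x by auto
    next
      case False
      let ?D = "{i\<in>I. x i \<inter> S0 i = {}}"
      have od: "odd (card ?D)" using C S0 x False unfolding gclq_def by auto
      have "card (I - ?D) = card I - card ?D" using fI by (intro card_Diff_subset) auto
      moreover have "card ?D \<le> card I" using fI by (intro card_mono) auto
      ultimately have "card (I - ?D) \<noteq> 0"
      proof (intro notI)
        assume "card (I - ?D) = 0" "card (I - ?D) = card I - card ?D" "card ?D \<le> card I"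
        then have "card I = card ?D" by linarith
        then show False using od ev by simp
      qed
      then obtain j where "j \<in> I - ?D" by (metis card.empty ex_in_conv)
      then obtain a where "j \<in> I" "a \<in> x j" "a \<in> S0 j" by auto
      then show ?thesis using x by auto
    qed
  qed
  have "card C \<le> card (\<Union>j\<in>I. \<Union>a\<in>S0 j. {x\<in>C. a \<in> x j})"
  proof (rule card_mono[OF _ cov])
    have "(\<Union>j\<in>I. \<Union>a\<in>S0 j. {x\<in>C. a \<in> x j}) \<subseteq> C" by blast
    then show "finite (\<Union>j\<in>I. \<Union>a\<in>S0 j. {x\<in>C. a \<in> x j})" using fC by (rule finite_subset)
  qed
  also have "\<dots> \<le> (\<Sum>j\<in>I. card (\<Union>a\<in>S0 j. {x\<in>C. a \<in> x j}))" by (rule card_UN_le[OF fI])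
  also have "\<dots> \<le> (\<Sum>j\<in>I. Ob)"
  proof (rule sum_mono)
    fix j assume j: "j \<in> I"
    have cS: "card (S0 j) = k" using C S0 j unfolding gclq_def by auto
    then have fS: "finite (S0 j)" using k card.infinite by fastforce
    have "card (\<Union>a\<in>S0 j. {x\<in>C. a \<in> x j}) \<le> (\<Sum>a\<in>S0 j. card {x\<in>C. a \<in> x j})"
      by (rule card_UN_le[OF fS])
    moreover have "k * (\<Sum>a\<in>S0 j. card {x\<in>C. a \<in> x j}) \<le> k * Ob"
    proof -
      have "k * (\<Sum>a\<in>S0 j. card {x\<in>C. a \<in> x j}) = (\<Sum>a\<in>S0 j. k * card {x\<in>C. a \<in> x j})"
        by (simp add: sum_distrib_left)
      also have "\<dots> \<le> (\<Sum>a\<in>S0 j. Ob)"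
        by (rule sum_mono) (rule IH[OF j gclq_sub[OF C j]])
      finally show ?thesis using cS by simp
    qed
    then have "(\<Sum>a\<in>S0 j. card {x\<in>C. a \<in> x j}) \<le> Ob" using k by simp
    ultimately show "card (\<Union>a\<in>S0 j. {x\<in>C. a \<in> x j}) \<le> Ob" by linarith
  qed
  finally show ?thesis by simp
qed

lemma arith1: "2 * Suc m * (2^m * fact m * n^(m+1)) = (2^(Suc m) * fact (Suc m) * n^(Suc m) :: nat)"
proof -
  have g: "2 * s * (P * F * (n * N)) = (2*P) * (s*F) * (n*N)" for s P F N :: nat
    by (simp add: algebra_simps)
  have "fact (Suc m) = Suc m * (fact m :: nat)" by (simp add: fact_Suc)
  then show ?thesis using g[of "Suc m" "2^m" "fact m" "n^m"] by simp
qed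

lemma arith2: "n * (2^(Suc m) * fact (Suc m) * n^(Suc m)) = (2^(Suc m) * fact (Suc m) * n^(Suc m+1) :: nat)"
proof -
  have g: "n * (A * B) = A * (n * B)" for A B :: nat by simp
  have e: "n^(Suc m+1) = n * n^(Suc m)" by (metis Suc_eq_plus1 power_Suc)
  show ?thesis unfolding e by (rule g)
qed

lemma main_bound:
  assumes k: "k \<ge> 1"
  shows "(\<forall>I C. finite I \<longrightarrow> card I = 2*m \<longrightarrow> gclq I n k C \<longrightarrow> card C \<le> 2^m * fact m * n^m) \<and>
         (\<forall>I C. finite I \<longrightarrow> card I = 2*m+1 \<longrightarrow> gclq I n k C \<longrightarrow> k * card C \<le> 2^m * fact m * n^(m+1))"
proof (induction m)
  case 0
  have ev: "card C \<le> 1" if "finite I" "card I = 0" "gclq I n k C" for I C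
    using that gclq_base by auto
  have "k * card C \<le> n * 1" if a: "finite I" "card I = 1" "gclq I n k C" for I C
  proof -
    obtain j where j: "I = {j}" using a(2) by (rule card_1_singletonE)
    show ?thesis
      by (rule odd_step[of j I]) (use j a ev in auto)
  qed
  then show ?case using ev by simp
next
  case (Suc m)
  have IHo: "k * card D \<le> 2^m * fact m * n^(m+1)" if "finite J" "card J = 2*m+1" "gclq J n k D" for J D
    using Suc.IH that by blast
  have ev: "card C \<le> 2^(Suc m) * fact (Suc m) * n^(Suc m)"
    if a: "finite I" "card I = 2*Suc m" "gclq I n k C" for I C
  proof -
    have "card C \<le> card I * (2^m * fact m * n^(m+1))"
    proof (rule even_step[OF a(1) _ _ k _ a(3)])
      show "even (card I)" using a(2) by simp
      show "I \<noteq> {}" using a(2) by auto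
      fix j D assume jD: "j \<in> I" "gclq (I - {j}) n k D"
      have "card (I - {j}) = 2*m+1" using a(1,2) jD(1) by simp
      then show "k * card D \<le> 2 ^ m * fact m * n ^ (m + 1)"
        using IHo[OF _ _ jD(2)] a(1) by blast
    qed
    moreover have "card I * (2^m * fact m * n^(m+1)) = 2^(Suc m) * fact (Suc m) * n^(Suc m)"
      by (simp only: a(2) arith1)
    ultimately show ?thesis by (rule ord_le_eq_trans)
  qed
  have od: "k * card C \<le> 2^(Suc m) * fact (Suc m) * n^(Suc m+1)"
    if a: "finite I" "card I = 2*Suc m+1" "gclq I n k C" for I C
  proof -
    obtain j where j: "j \<in> I" using a(2) by fastforce
    have "k * card C \<le> n * (2^(Suc m) * fact (Suc m) * n^(Suc m))"
    proof (rule odd_step[OF j _ a(3)])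
      fix D assume "gclq (I - {j}) n k D"
      moreover have "card (I - {j}) = 2 * Suc m" using a(1,2) j by simp
      ultimately show "card D \<le> 2^(Suc m) * fact (Suc m) * n^(Suc m)" using ev a(1) by blast
    qed
    then show ?thesis unfolding arith2 .
  qed
  show ?case using ev od by blast
qed


lemma finite_kv: "finite (kneser_vertices n k)"
  unfolding kneser_vertices_def by (rule finite_subset[of _ "Pow {0..<n}"]) auto

lemma finite_xv: "finite (xor_kneser_vertices l n k)"
  unfolding xor_kneser_vertices_def by (rule finite_PiE) (auto simp: finite_kv)

lemma clique_gclq: assumes "is_xor_kneser_clique l n k C" shows "gclq {0..<l} n k C"
proof -
  have "finite C" using assms finite_xv unfolding is_xor_kneser_clique_def by (meson finite_subset)
  moreover have "\<forall>x\<in>C. \<forall>i\<in>{0..<l}. x i \<subseteq> {0..<n} \<and> card (x i) = k"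
    using assms unfolding is_xor_kneser_clique_def xor_kneser_vertices_def kneser_vertices_def
    by (auto simp: PiE_iff)
  moreover have "\<forall>x\<in>C. \<forall>y\<in>C. x \<noteq> y \<longrightarrow> odd (card {i\<in>{0..<l}. x i \<inter> y i = {}})"
    using assms unfolding is_xor_kneser_clique_def xor_kneser_adj_def kneser_adj_def by auto
  ultimately show ?thesis unfolding gclq_def by blast
qed

lemma upper_clique:
  assumes "is_xor_kneser_clique l n k C" "k \<ge> 1"
  shows "card C \<le> 2 ^ (l div 2) * fact (l div 2) * n ^ ((l + 1) div 2)"
proof -
  have g: "gclq {0..<l} n k C" by (rule clique_gclq[OF assms(1)])
  obtain m where "l = 2*m \<or> l = 2*m+1" by (metis evenE oddE)
  then show ?thesis
  proof
    assume l: "l = 2*m"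
    have "card C \<le> 2^m * fact m * n^m"
      using conjunct1[OF main_bound[OF assms(2), of m n], rule_format, of "{0..<l}" C] g l by simp
    then show ?thesis using l by simp
  next
    assume l: "l = 2*m+1"
    then have "k * card C \<le> 2^m * fact m * n^(m+1)"
      using conjunct2[OF main_bound[OF assms(2), of m n], rule_format, of "{0..<l}" C] g l by simp
    moreover have "card C \<le> k * card C" using assms(2) by simp
    ultimately have "card C \<le> 2^m * fact m * n^(m+1)" by (metis le_trans)
    moreover have "l div 2 = m" "(l+1) div 2 = m+1" using l by simp_all
    ultimately show ?thesis by simp
  qed
qed

definition gU :: "nat set \<Rightarrow> nat \<Rightarrow> nat" where "gU U s = (if s \<in> U then s else Min U)"
definition blk :: "nat \<Rightarrow> nat \<Rightarrow> nat set \<Rightarrow> (nat \<Rightarrow> nat) \<Rightarrow> nat set" where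
  "blk q k U v = (\<lambda>s. s*q + v (gU U s)) ` {0..<k}"

lemma gU_in: "finite U \<Longrightarrow> U \<noteq> {} \<Longrightarrow> gU U s \<in> U"
  unfolding gU_def by auto

lemma dm: assumes "c < (q::nat)" shows "(s*q + c) div q = s" "(s*q+c) mod q = c"
  using assms by auto

lemma blk_vert:
  assumes "q > 0" "q*k \<le> n" "finite U" "U \<noteq> {}" "\<forall>r\<in>U. v r < q"
  shows "blk q k U v \<in> kneser_vertices n k"
proof -
  have vq: "v (gU U s) < q" for s using assms(5) gU_in[OF assms(3,4), of s] by blast
  have inj: "inj_on (\<lambda>s. s*q + v (gU U s)) {0..<k}"
  proof (rule inj_onI)
    fix s s' assume "s*q + v (gU U s) = s'*q + v (gU U s')"
    then have "(s*q + v (gU U s)) div q = (s'*q + v (gU U s')) div q" by simp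
    then show "s = s'" using dm(1)[OF vq] by simp
  qed
  have sub: "s*q + v (gU U s) < n" if "s < k" for s
  proof -
    have "s*q + v (gU U s) < s*q + q" using vq by simp
    also have "\<dots> = (s+1)*q" by simp
    also have "\<dots> \<le> k*q" using that by (intro mult_right_mono) auto
    finally show ?thesis using assms(2) by (simp add: mult.commute)
  qed
  have "blk q k U v \<subseteq> {0..<n}" unfolding blk_def using sub by auto
  moreover have "card (blk q k U v) = k" unfolding blk_def using card_image[OF inj] by simp
  ultimately show ?thesis by (simp add: kneser_vertices_def)
qed

lemma blk_disj:
  assumes "q > 0" "U \<subseteq> {0..<k}" "finite U" "U \<noteq> {}" "\<forall>r\<in>U. v r < q \<and> w r < q"
  shows "(blk q k U v \<inter> blk q k U w = {}) \<longleftrightarrow> (\<forall>r\<in>U. v r \<noteq> w r)"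
proof
  assume d: "blk q k U v \<inter> blk q k U w = {}"
  show "\<forall>r\<in>U. v r \<noteq> w r"
  proof (intro ballI notI)
    fix r assume r: "r \<in> U" "v r = w r"
    have "r < k" using r assms by auto
    moreover have "gU U r = r" using r unfolding gU_def by simp
    ultimately have "r*q + v r \<in> blk q k U v" "r*q + w r \<in> blk q k U w"
      unfolding blk_def by (intro image_eqI[where x=r]; simp)+
    then show False using d r by auto
  qed
next
  assume nd: "\<forall>r\<in>U. v r \<noteq> w r"
  show "blk q k U v \<inter> blk q k U w = {}"
  proof (rule ccontr)
    assume "blk q k U v \<inter> blk q k U w \<noteq> {}"
    then obtain s s' where e: "s*q + v (gU U s) = s'*q + w (gU U s')"
      unfolding blk_def by auto
    have vq: "v (gU U s) < q" "w (gU U s') < q"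
      using assms(5) gU_in[OF assms(3,4), of s] gU_in[OF assms(3,4), of s'] by auto
    have "s = s'" using arg_cong[OF e, of "\<lambda>x. x div q"] dm(1)[OF vq(1)] dm(1)[OF vq(2)] by simp
    then have "v (gU U s) = w (gU U s)" using e by simp
    then show False using nd gU_in[OF assms(3,4), of s] by blast
  qed
qed


lemma card_Pow_ne: "finite D \<Longrightarrow> card (Pow D - {{}}) = 2 ^ card D - 1"
  by (simp add: card_Diff_singleton card_Pow)

lemma lower_clique:
  assumes k: "k \<ge> 1" and t: "t \<ge> 1" "t \<le> k" "2^t \<le> l+1" and q: "q = n div k" "q \<ge> 1"
  shows "\<exists>C. is_xor_kneser_clique l n k C \<and> card C = q^t"
proof -
  have qk: "q*k \<le> n" using q by (simp add: div_times_less_eq_dividend mult.commute)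
  have kn: "k \<le> n" using qk q by (metis le_trans mult_le_mono1 mult_1)
  have cP: "card (Pow {0..<t} - {{}}) = 2^t - 1" using card_Pow_ne[of "{0..<t}"] by simp
  obtain h where h: "bij_betw h {0..<(2::nat)^t - 1} (Pow {0..<t} - {{}})"
    using ex_bij_betw_nat_finite[of "Pow {0..<t} - {{}}"] cP by auto
  have hmem: "h i \<in> Pow {0..<t} - {{}}" if "i < 2^t - 1" for i
  proof -
    have "i \<in> {0..<(2::nat)^t - 1}" using that by simp
    then show ?thesis using bij_betwE[OF h] by blast
  qed
  have hU: "h i \<subseteq> {0..<t}" "h i \<noteq> {}" "finite (h i)" if "i < 2^t - 1" for i
  proof -
    show a: "h i \<subseteq> {0..<t}" "h i \<noteq> {}" using hmem[OF that] by auto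
    show "finite (h i)" using finite_subset[OF a(1)] by simp
  qed
  define V where "V = PiE {0..<t} (\<lambda>_. {0..<q})"
  define Sv where "Sv v i = (if i < 2^t - 1 then blk q k (h i) v else {0..<k})" for v i
  define phi where "phi v = restrict (Sv v) {0..<l}" for v
  have vq: "\<forall>r\<in>h i. v r < q" if "v \<in> V" "i < 2^t - 1" for v i
    using that hU[OF that(2)] unfolding V_def by (auto simp: PiE_iff)
  have Sv_vert: "Sv v i \<in> kneser_vertices n k" if "v \<in> V" for v i
  proof (cases "i < 2^t - 1")
    case True
    have "blk q k (h i) v \<in> kneser_vertices n k"
      by (rule blk_vert) (use q(2) qk hU[OF True] vq[OF that True] in auto)
    then show ?thesis unfolding Sv_def using True by simp
  next
    case False
    have "{0..<k} \<in> kneser_vertices n k" unfolding kneser_vertices_def using kn by simp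
    then show ?thesis unfolding Sv_def using False by simp
  qed
  have phi_vert: "phi v \<in> xor_kneser_vertices l n k" if "v \<in> V" for v
    unfolding xor_kneser_vertices_def phi_def by (simp add: restrict_PiE_iff Sv_vert[OF that])
  have cnt: "odd (card {i\<in>{0..<l}. phi v i \<inter> phi w i = {}})" if vw: "v \<in> V" "w \<in> V" "v \<noteq> w" for v w
  proof -
    define D where "D = {r\<in>{0..<t}. v r \<noteq> w r}"
    have Dne: "D \<noteq> {}"
    proof
      assume "D = {}"
      then have "\<forall>r\<in>{0..<t}. v r = w r" unfolding D_def by auto
      then have "v = w" using vw(1,2) unfolding V_def by (metis PiE_ext)
      then show False using vw by simp
    qed
    have fD: "finite D" unfolding D_def by auto
    have seteq: "{i\<in>{0..<l}. phi v i \<inter> phi w i = {}} = {i\<in>{0..<2^t-1}. h i \<subseteq> D}"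
    proof (rule set_eqI)
      fix i
      show "i \<in> {i\<in>{0..<l}. phi v i \<inter> phi w i = {}} \<longleftrightarrow> i \<in> {i\<in>{0..<2^t-1}. h i \<subseteq> D}"
      proof (cases "i < 2^t - 1")
        case True
        then have il: "i < l" using t by simp
        have "h i \<subseteq> {0..<k}" using hU[OF True] t by auto
        then have "(blk q k (h i) v \<inter> blk q k (h i) w = {}) \<longleftrightarrow> (\<forall>r\<in>h i. v r \<noteq> w r)"
          using blk_disj[of q "h i" k v w] q hU[OF True] vq[OF vw(1) True] vq[OF vw(2) True] by auto
        moreover have "(\<forall>r\<in>h i. v r \<noteq> w r) \<longleftrightarrow> h i \<subseteq> D" using hU[OF True] unfolding D_def by auto
        moreover have "phi v i = blk q k (h i) v" "phi w i = blk q k (h i) w"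
          using il True unfolding phi_def Sv_def by simp_all
        ultimately show ?thesis using True il by simp
      next
        case False
        have "{0..<k} \<inter> {0..<k} \<noteq> ({}::nat set)" using k by auto
        moreover have "i < l \<Longrightarrow> phi v i = {0..<k} \<and> phi w i = {0..<k}"
          using False unfolding phi_def Sv_def by simp
        ultimately show ?thesis using False by auto
      qed
    qed
    have inj: "inj_on h {i\<in>{0..<2^t-1}. h i \<subseteq> D}"
      using h unfolding bij_betw_def by (auto intro: inj_on_subset)
    have img: "h ` {i\<in>{0..<2^t-1}. h i \<subseteq> D} = Pow D - {{}}"
    proof -
      have "h ` {i\<in>{0..<2^t-1}. h i \<subseteq> D} = {U \<in> h ` {0..<2^t-1}. U \<subseteq> D}" by auto
      also have "\<dots> = {U \<in> Pow {0..<t} - {{}}. U \<subseteq> D}" using h unfolding bij_betw_def by simp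
      also have "\<dots> = Pow D - {{}}" unfolding D_def by auto
      finally show ?thesis .
    qed
    have "card {i\<in>{0..<l}. phi v i \<inter> phi w i = {}} = 2 ^ card D - 1"
      using seteq card_image[OF inj] img card_Pow_ne[OF fD] by simp
    moreover have "card D \<ge> 1" using Dne fD by (simp add: Suc_leI card_gt_0_iff)
    ultimately show ?thesis by (simp add: Suc_le_eq)
  qed
  have inj: "inj_on phi V"
  proof (rule inj_onI)
    fix v w assume vw: "v \<in> V" "w \<in> V" "phi v = phi w"
    show "v = w"
    proof (rule ccontr)
      assume "v \<noteq> w"
      then have "odd (card {i\<in>{0..<l}. phi v i \<inter> phi w i = {}})" using cnt vw by blast
      then have "{i\<in>{0..<l}. phi v i \<inter> phi w i = {}} \<noteq> {}"
      proof (intro notI)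
        assume "odd (card {i\<in>{0..<l}. phi v i \<inter> phi w i = {}})" "{i\<in>{0..<l}. phi v i \<inter> phi w i = {}} = {}"
        then show False by (simp only: card.empty) simp
      qed
      then obtain i where i: "i \<in> {0..<l}" "phi v i \<inter> phi w i = {}" by blast
      then have "phi v i = {}" using vw by simp
      moreover have "phi v i \<in> kneser_vertices n k" using Sv_vert[OF vw(1)] i unfolding phi_def by simp
      ultimately show False using k unfolding kneser_vertices_def by auto
    qed
  qed
  have cl: "is_xor_kneser_clique l n k (phi ` V)"
    unfolding is_xor_kneser_clique_def xor_kneser_adj_def kneser_adj_def
  proof (intro conjI ballI impI subsetI)
    fix x assume "x \<in> phi ` V"
    then show "x \<in> xor_kneser_vertices l n k" using phi_vert by blast
  next
    fix x y assume "x \<in> phi ` V" "y \<in> phi ` V" "x \<noteq> y"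
    then obtain v w where "v \<in> V" "w \<in> V" "x = phi v" "y = phi w" "v \<noteq> w" by blast
    then show "odd (card {i \<in> {0..<l}. x i \<inter> y i = {}})" using cnt by simp
  qed
  have "card (phi ` V) = q^t" using card_image[OF inj] unfolding V_def by (simp add: card_PiE)
  then show ?thesis using cl by blast
qed


lemma fin_cards: "finite {card C | C. is_xor_kneser_clique l n k C}"
proof -
  have "{card C | C. is_xor_kneser_clique l n k C} \<subseteq> {0..card (xor_kneser_vertices l n k)}"
    unfolding is_xor_kneser_clique_def using finite_xv[of l n k] by (auto intro: card_mono)
  then show ?thesis by (rule finite_subset) simp
qed

lemma ne_cards: "{card C | C. is_xor_kneser_clique l n k C} \<noteq> {}"
proof -
  have "is_xor_kneser_clique l n k {}" unfolding is_xor_kneser_clique_def by simp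
  then show ?thesis by blast
qed

lemma log_bound:
  assumes "l \<ge> (1::nat)"
  shows "2 ^ nat \<lfloor>log 2 (real (l + 1))\<rfloor> \<le> l + 1" "nat \<lfloor>log 2 (real (l + 1))\<rfloor> \<ge> 1"
proof -
  have pos: "log 2 (real (l + 1)) \<ge> 1" using assms by simp
  let ?t = "nat \<lfloor>log 2 (real (l + 1))\<rfloor>"
  have "real ?t \<le> log 2 (real (l + 1))" using pos by linarith
  then have "2 powr real ?t \<le> 2 powr log 2 (real (l + 1))" by (intro powr_mono) auto
  also have "2 powr log 2 (real (l + 1)) = real (l + 1)" by (rule powr_log_cancel) auto
  finally have i1: "2 powr real ?t \<le> real (l + 1)" .
  have e: "(2::real) powr real ?t = 2 ^ ?t" by (rule powr_realpow) simp
  have i2: "(2::real) ^ ?t \<le> real (l + 1)" using i1 unfolding e .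
  then show "2 ^ ?t \<le> l + 1" by (metis of_nat_le_iff of_nat_numeral of_nat_power)
  show "?t \<ge> 1" using pos by linarith
qed

theorem theorem1p3:
  fixes l n k :: nat
  assumes "l \<ge> 1" and "k \<ge> 1" and "n \<ge> 1"
  shows "f_xor l n k \<le> 2 ^ (l div 2) * fact (l div 2) * n ^ ((l + 1) div 2) \<and>
         (k \<ge> nat \<lfloor>log 2 (real (l + 1))\<rfloor> \<longrightarrow>
          f_xor l n k \<ge> (n div k) ^ nat \<lfloor>log 2 (real (l + 1))\<rfloor>)"
proof (intro conjI impI)
  show "f_xor l n k \<le> 2 ^ (l div 2) * fact (l div 2) * n ^ ((l + 1) div 2)"
    unfolding f_xor_def using fin_cards ne_cards upper_clique[OF _ assms(2)]
    by (subst Max_le_iff) auto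
next
  let ?t = "nat \<lfloor>log 2 (real (l + 1))\<rfloor>"
  assume kt: "k \<ge> ?t"
  show "f_xor l n k \<ge> (n div k) ^ ?t"
  proof (cases "n div k = 0")
    case True
    have z: "(n div k) ^ ?t = 0" using True log_bound(2)[OF assms(1)] assms(1) by (simp add: power_0_left)
    show ?thesis unfolding z by (rule zero_le)
  next
    case False
    then obtain C where C: "is_xor_kneser_clique l n k C" "card C = (n div k) ^ ?t"
      using lower_clique[OF assms(2) log_bound(2)[OF assms(1)] kt log_bound(1)[OF assms(1)], of "n div k" n]
      by auto
    have "card C \<in> {card C | C. is_xor_kneser_clique l n k C}" using C(1) by blast
    then have "card C \<le> f_xor l n k" unfolding f_xor_def by (rule Max_ge[OF fin_cards])
    then show ?thesis using C(2) by simp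
  qed
qed

end
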